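(* Let $n\ge2$, let $m\ge 3$ be odd, and let $\mathcal{A}$ be an $m$th order $n$-dimensional complete Hankel tensor which has at least one H-eigenvalue. Then all H-eigenvalues of $\mathcal{A}$ are nonnegative. Moreover, if $\lambda$ is an H-eigenvalue of $\mathcal{A}$ with H-eigenvector $x=(x_1,\dots,x_n)^\top$, then either $\lambda=0$, or $\lambda>0$ and $x_1\neq 0$.
   Context: A complete Hankel tensor is a tensor of the form $\mathcal{A}=\sum_{k=1}^r\alpha_k(u_k)^m$ with $\alpha_k>0$, $u_k=(1,u_k,u_k^2,\dots,u_k^{n-1})^\top$ for pairwise distinct reals $u_1,\dots,u_r$, where $w^m$ denotes the tensor with entries $w_{i_1}\cdots w_{i_m}$. For a symmetric tensor $\mathcal{A}=(a_{i_1\cdots i_m})$ and $x\in\mathbb{C}^n$, $\mathcal{A}x^{m-1}$ is the vector with $i$th component $\sum_{i_2,\dots,i_m=1}^n a_{ii_2\cdots i_m}x_{i_2}\cdots x_{i_m}$, and $x^{[m-1]}$ is the vector with $i$th component $x_i^{m-1}$. A real number $\lambda$ is an H-eigenvalue of $\mathcal{A}$ with H-eigenvector $x$ if $x\in\mathbb{R}^n\setminus\{0\}$ and $\mathcal{A}x^{m-1}=\lambda x^{[m-1]}$. *)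

theory Defs
  imports Complex_Main
begin

text \<open>Conventions: indices are 0-based, so the paper's index i (1..n) is our i-1.
  A tensor of order m and dimension n is a function on index lists of length m
  with entries in {..<n}; a vector in R^n is a function nat => real (only the
  values below n matter).\<close>

type_synonym tensor = "nat list \<Rightarrow> real"

definition index_lists :: "nat \<Rightarrow> nat \<Rightarrow> nat list set" where
  "index_lists n k = {is. length is = k \<and> set is \<subseteq> {..<n}}"

text \<open>A = sum_k alpha_k (u_k)^m with u_k = (1, u_k, ..., u_k^(n-1)).\<close>
definition complete_Hankel :: "nat \<Rightarrow> nat \<Rightarrow> tensor \<Rightarrow> bool" where
  "complete_Hankel n m A \<longleftrightarrow>
     (\<exists>r::nat. \<exists>\<alpha> u :: nat \<Rightarrow> real. r \<ge> 1 \<and> (\<forall>k<r. \<alpha> k > 0) \<and> inj_on u {..<r} \<and>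
        (\<forall>is \<in> index_lists n m.
           A is = (\<Sum>k<r. \<alpha> k * prod_list (map (\<lambda>i. u k ^ i) is))))"

definition tensor_apply :: "nat \<Rightarrow> nat \<Rightarrow> tensor \<Rightarrow> (nat \<Rightarrow> real) \<Rightarrow> nat \<Rightarrow> real" where
  "tensor_apply n m A x i = (\<Sum>is \<in> index_lists n (m - 1). A (i # is) * prod_list (map x is))"

definition H_eigenpair :: "nat \<Rightarrow> nat \<Rightarrow> tensor \<Rightarrow> real \<Rightarrow> (nat \<Rightarrow> real) \<Rightarrow> bool" where
  "H_eigenpair n m A lam x \<longleftrightarrow>
     (\<exists>i<n. x i \<noteq> 0) \<and> (\<forall>i<n. tensor_apply n m A x i = lam * x i ^ (m - 1))"

definition H_eigenvalue :: "nat \<Rightarrow> nat \<Rightarrow> tensor \<Rightarrow> real \<Rightarrow> bool" where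
  "H_eigenvalue n m A lam \<longleftrightarrow> (\<exists>x. H_eigenpair n m A lam x)"

end

theory Submission
  imports Defs
begin

lemma index_lists_Suc:
  "index_lists n (Suc k) = (\<lambda>(j,is). j # is) ` ({..<n} \<times> index_lists n k)"
  unfolding index_lists_def
  by (auto simp: image_iff length_Suc_conv)

lemma finite_index_lists: "finite (index_lists n k)"
proof -
  have "index_lists n k = {xs. set xs \<subseteq> {..<n} \<and> length xs = k}"
    unfolding index_lists_def by auto
  thus ?thesis using finite_lists_length_eq[of "{..<n}" k] by simp
qed

lemma sum_index_lists_prod:
  fixes f :: "nat \<Rightarrow> real"
  shows  "(\<Sum>is \<in> index_lists n k. prod_list (map f is)) = (\<Sum>j<n. f j) ^ k"
proof (induction k)
  case 0
  have "index_lists n 0 = {[]}" unfolding index_lists_def by auto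
  thus ?case by simp
next
  case (Suc k)
  have inj: "inj_on (\<lambda>(j,is). j # is) ({..<n} \<times> index_lists n k)"
    by (auto simp: inj_on_def)
  have "(\<Sum>is \<in> index_lists n (Suc k). prod_list (map f is))
      = (\<Sum>p \<in> {..<n} \<times> index_lists n k. f (fst p) * prod_list (map f (snd p)))"
    unfolding index_lists_Suc apply (subst sum.reindex[OF inj]) by (rule sum.cong) (auto simp: split_beta)
  also have "\<dots> = (\<Sum>j<n. \<Sum>is \<in> index_lists n k. f j * prod_list (map f is))"
    by (simp add: sum.cartesian_product split_beta)
  also have "\<dots> = (\<Sum>j<n. f j) * (\<Sum>is \<in> index_lists n k. prod_list (map f is))"
    by (simp add: sum_distrib_left sum_distrib_right) (rule sum.swap)
  finally show ?case using Suc by simp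
qed

lemma prod_list_map_mult:
  fixes f g :: "'a \<Rightarrow> real"
  shows  "prod_list (map f xs) * prod_list (map g xs) = prod_list (map (\<lambda>j. f j * g j) xs)"
  proof (induction xs)
  case (Cons a xs)
  then show ?case by (simp add: Cons.IH[symmetric] mult_ac)
qed simp

lemma tensor_apply_formula:
  assumes "m \<ge> 1" and "i < n"
    and A: "\<forall>is \<in> index_lists n m.
           A is = (\<Sum>k<r. \<alpha> k * prod_list (map (\<lambda>i. u k ^ i) is))"
  shows "tensor_apply n m A x i = (\<Sum>k<r. \<alpha> k * u k ^ i * (\<Sum>j<n. u k ^ j * x j) ^ (m - 1))"
proof -
  have mem: "i # is \<in> index_lists n m" if "is \<in> index_lists n (m - 1)" for "is"
    using that assms(1,2) unfolding index_lists_def by auto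
  have "tensor_apply n m A x i
      = (\<Sum>is \<in> index_lists n (m - 1). \<Sum>k<r. \<alpha> k * u k ^ i *
            prod_list (map (\<lambda>j. u k ^ j * x j) is))"
    unfolding tensor_apply_def
  proof (rule sum.cong[OF refl])
    fix "is" assume "is \<in> index_lists n (m - 1)"
    hence "A (i # is) = (\<Sum>k<r. \<alpha> k * prod_list (map (\<lambda>i. u k ^ i) (i # is)))"
      using A mem by blast
    thus "A (i # is) * prod_list (map x is) = (\<Sum>k<r. \<alpha> k * u k ^ i *
            prod_list (map (\<lambda>j. u k ^ j * x j) is))"
      by (simp add: sum_distrib_right prod_list_map_mult[symmetric] mult.assoc)
  qed
  also have "\<dots> = (\<Sum>k<r. \<alpha> k * u k ^ i * (\<Sum>is \<in> index_lists n (m - 1).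
            prod_list (map (\<lambda>j. u k ^ j * x j) is)))"
    by (subst sum.swap) (simp add: sum_distrib_left)
  also have "\<dots> = (\<Sum>k<r. \<alpha> k * u k ^ i * (\<Sum>j<n. u k ^ j * x j) ^ (m - 1))"
    by (simp add: sum_index_lists_prod)
  finally show ?thesis .
qed

theorem proposition4:
  fixes n m :: nat and A :: tensor
  assumes "n \<ge> 2" and "m \<ge> 3" and "odd m"
    and "complete_Hankel n m A"
    and "\<exists>lam. H_eigenvalue n m A lam"
  shows "(\<forall>lam. H_eigenvalue n m A lam \<longrightarrow> lam \<ge> 0) \<and>
         (\<forall>lam x. H_eigenpair n m A lam x \<longrightarrow> lam = 0 \<or> (lam > 0 \<and> x 0 \<noteq> 0))"
proof -
  obtain r \<alpha> and u :: "nat \<Rightarrow> real" where apos: "\<forall>k<r. \<alpha> k > (0::real)"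
    and A: "\<forall>is \<in> index_lists n m.
           A is = (\<Sum>k<r. \<alpha> k * prod_list (map (\<lambda>i. u k ^ i) is))"
    using assms(4) unfolding complete_Hankel_def by blast
  have ev: "even (m - 1)" using assms(2,3) by simp
  have key: "lam = 0 \<or> (lam > 0 \<and> x 0 \<noteq> 0)" if H: "H_eigenpair n m A lam x" for lam x
  proof -
    define s where "s k = (\<Sum>j<n. u k ^ j * x j)" for k
    have TA: "tensor_apply n m A x i = (\<Sum>k<r. \<alpha> k * u k ^ i * s k ^ (m - 1))" if "i < n" for i
      using tensor_apply_formula[OF _ that A] assms(2) unfolding s_def by simp
    from H obtain i0 where i0: "i0 < n" "x i0 \<noteq> 0"
      and eq: "\<forall>i<n. tensor_apply n m A x i = lam * x i ^ (m - 1)"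
      unfolding H_eigenpair_def by blast
    have n0: "0 < n" using assms(1) by simp
    have nn: "\<forall>k\<in>{..<r}. 0 \<le> \<alpha> k * s k ^ (m - 1)"
      using apos ev by (auto intro!: mult_nonneg_nonneg simp: less_imp_le zero_le_even_power)
    have e0: "(\<Sum>k<r. \<alpha> k * s k ^ (m - 1)) = lam * x 0 ^ (m - 1)"
      using TA[OF n0] eq n0 by simp
    show ?thesis
    proof (cases "x 0 = 0")
      case True
      have "0 < m - 1" using assms(2) by simp
      hence "(\<Sum>k<r. \<alpha> k * s k ^ (m - 1)) = 0" using e0 True by simp
      hence z: "\<forall>k\<in>{..<r}. \<alpha> k * s k ^ (m - 1) = 0"
        using sum_nonneg_eq_0_iff[of "{..<r}" "\<lambda>k. \<alpha> k * s k ^ (m - 1)"] nn by simp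
      have "tensor_apply n m A x i0 = 0"
        unfolding TA[OF i0(1)]
        by (rule sum.neutral) (use z in \<open>auto simp: mult.commute mult.left_commute\<close>)
      hence "lam * x i0 ^ (m - 1) = 0" using eq i0 by simp
      thus ?thesis using i0 by simp
    next
      case False
      have xp: "x 0 ^ (m - 1) > 0" using False ev
        by (simp add: zero_less_power_eq)
      have "lam * x 0 ^ (m - 1) \<ge> 0" using e0 sum_nonneg[of "{..<r}" "\<lambda>k. \<alpha> k * s k ^ (m - 1)"] nn by simp
      hence "lam \<ge> 0" using xp by (simp add: zero_le_mult_iff)
      thus ?thesis using False by auto
    qed
  qed
  show ?thesis
  proof
    show "\<forall>lam. H_eigenvalue n m A lam \<longrightarrow> lam \<ge> 0"
      unfolding H_eigenvalue_def using key by force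
    show "\<forall>lam x. H_eigenpair n m A lam x \<longrightarrow> lam = 0 \<or> (lam > 0 \<and> x 0 \<noteq> 0)"
      using key by blast
  qed
qed

end
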